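(* Let $T_{a_1\dots a_r}\neq0$ be a rank-$r$ tensor, $r\ge1$. Then $T\in\mathcal{DP}$ if and only if $T_{a_1\dots a_r}u_1^{a_1}\cdots u_r^{a_r}>0$ for every set $u_1,\dots,u_r$ of timelike future-pointing vectors.
   Context: Lorentzian metric of signature $(+,-,\dots,-)$ with time orientation; timelike: $v\cdot v>0$; causal: $v\ne0$, $v\cdot v\ge0$. $\mathcal{DP}$: tensors $T$ with $T_{a_1\dots a_r}u_1^{a_1}\cdots u_r^{a_r}\ge0$ for all causal future-pointing $u_1,\dots,u_r$. *)

theory Defs
  imports Complex_Main
begin

text \<open>Minkowski space of dimension 1 + CARD('n), in an orthonormal time-oriented
  frame: a vector is a function on the index type 'n option, where the index
  None is the time coordinate and Some i are the spatial coordinates.\<close>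

type_synonym 'n lvec = "'n option \<Rightarrow> real"

definition mdot :: "'n::finite lvec \<Rightarrow> 'n lvec \<Rightarrow> real" where
  "mdot u v = u None * v None - (\<Sum>i\<in>UNIV. u (Some i) * v (Some i))"

definition timelike :: "'n::finite lvec \<Rightarrow> bool" where
  "timelike v \<longleftrightarrow> mdot v v > 0"

definition causal :: "'n::finite lvec \<Rightarrow> bool" where
  "causal v \<longleftrightarrow> v \<noteq> (\<lambda>_. 0) \<and> mdot v v \<ge> 0"

definition future_pointing :: "'n::finite lvec \<Rightarrow> bool" where
  "future_pointing v \<longleftrightarrow> v None > 0"

text \<open>A rank-r (covariant) tensor is given by its components T [a_1,...,a_r]
  (only index lists of length r matter).  Full contraction with r vectors u_0..u_(r-1).\<close>

definition contract :: "nat \<Rightarrow> ('n::finite option list \<Rightarrow> real) \<Rightarrow> (nat \<Rightarrow> 'n lvec) \<Rightarrow> real" where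
  "contract r T u = (\<Sum>as\<in>{as. length as = r}. T as * (\<Prod>k<r. u k (as ! k)))"

definition tensor_nonzero :: "nat \<Rightarrow> ('n option list \<Rightarrow> real) \<Rightarrow> bool" where
  "tensor_nonzero r T \<longleftrightarrow> (\<exists>as. length as = r \<and> T as \<noteq> 0)"

definition DP :: "nat \<Rightarrow> ('n::finite option list \<Rightarrow> real) \<Rightarrow> bool" where
  "DP r T \<longleftrightarrow> (\<forall>u. (\<forall>k<r. causal (u k) \<and> future_pointing (u k)) \<longrightarrow> contract r T u \<ge> 0)"

end

theory Submission
  imports Defs
begin

lemma contract_upd:
  assumes "k < r"
  shows "contract r T (u(k := w)) = (\<Sum>as | length as = r. T as * (w (as!k) * (\<Prod>i\<in>{..<r}-{k}. u i (as!i))))"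
  unfolding contract_def
proof (rule sum.cong[OF refl])
  fix as :: "'a option list"
  have "(\<Prod>i<r. (u(k := w)) i (as ! i)) = (u(k := w)) k (as ! k) * (\<Prod>i\<in>{..<r}-{k}. (u(k := w)) i (as ! i))"
    using assms by (subst prod.remove[of "{..<r}" k]) auto
  also have "(\<Prod>i\<in>{..<r}-{k}. (u(k := w)) i (as ! i)) = (\<Prod>i\<in>{..<r}-{k}. u i (as ! i))"
    by (rule prod.cong) auto
  finally show "T as * (\<Prod>i<r. (u(k := w)) i (as ! i)) = T as * (w (as!k) * (\<Prod>i\<in>{..<r}-{k}. u i (as!i)))" by simp
qed

lemma contract_lin:
  assumes "k < r"
  shows "contract r T (u(k := (\<lambda>i. a * x i + b * y i))) = a * contract r T (u(k:=x)) + b * contract r T (u(k:=y))"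
  using assms by (simp add: contract_upd sum_distrib_left sum.distrib[symmetric] algebra_simps)

lemma contract_cong:
  assumes "\<And>k. k < r \<Longrightarrow> v k = v' k"
  shows "contract r T v = contract r T v'"
  unfolding contract_def
  by (intro sum.cong refl arg_cong2[where f="(*)"] prod.cong) (auto simp: assms)

lemma timelike_causal: "timelike v \<Longrightarrow> causal v"
  unfolding timelike_def causal_def by (auto simp: mdot_def)

lemma finite_lists: "finite {as :: ('n::finite) option list. length as = r}"
  using finite_lists_length_eq[of "UNIV :: 'n option set" r] by simp

lemma cone_lemma:
  fixes G :: "'n::finite lvec \<Rightarrow> real"
  assumes lin: "\<And>a b x y. G (\<lambda>i. a * x i + b * y i) = a * G x + b * G y"
    and pos: "\<And>w. causal w \<Longrightarrow> future_pointing w \<Longrightarrow> G w \<ge> 0"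
    and p: "timelike p" "future_pointing p" "G p = 0"
  shows "G w = 0"
proof -
  let ?f = "\<lambda>e::real. mdot (\<lambda>i. p i + e * w i) (\<lambda>i. p i + e * w i)"
  let ?g = "\<lambda>e::real. p None + e * w None"
  have "(?f \<longlongrightarrow> ?f 0) (at 0)" unfolding mdot_def by (intro tendsto_intros)
  then have "eventually (\<lambda>e. ?f e > 0) (at 0)"
    using p(1) by (intro order_tendstoD) (auto simp: timelike_def)
  moreover have "(?g \<longlongrightarrow> ?g 0) (at 0)" by (intro tendsto_intros)
  then have "eventually (\<lambda>e. ?g e > 0) (at 0)"
    using p(2) by (intro order_tendstoD) (auto simp: future_pointing_def)
  ultimately have "eventually (\<lambda>e. ?f e > 0 \<and> ?g e > 0) (at (0::real))" by (rule eventually_conj)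
  then obtain d :: real where d: "d > 0" and hd: "\<And>e. e \<noteq> 0 \<Longrightarrow> dist e 0 < d \<Longrightarrow> ?f e > 0 \<and> ?g e > 0"
    unfolding eventually_at by blast
  define e where "e = d / 2"
  have e: "e > 0" "dist e 0 < d" "dist (-e) 0 < d" using d by (auto simp: e_def)
  have hs: "G (\<lambda>i. 1 * p i + s * w i) \<ge> 0" if "s = e \<or> s = -e" for s
  proof (rule pos)
    have "?f s > 0 \<and> ?g s > 0" using hd[of s] that e by auto
    then show "causal (\<lambda>i. 1 * p i + s * w i)" "future_pointing (\<lambda>i. 1 * p i + s * w i)"
      using timelike_causal unfolding timelike_def future_pointing_def by auto
  qed
  have "G (\<lambda>i. 1 * p i + e * w i) \<ge> 0" by (rule hs) simp
  moreover have "G (\<lambda>i. 1 * p i + (-e) * w i) \<ge> 0" by (rule hs) simp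
  ultimately have "e * G w \<ge> 0" "- e * G w \<ge> 0" unfolding lin p(3) by auto
  then show ?thesis using e(1)
    by (metis mult_minus_left neg_0_le_iff_le order_antisym zero_le_mult_iff linorder_not_le)
qed

definition e0 :: "'n option \<Rightarrow> real" where "e0 = (\<lambda>i. if i = None then 1 else 0)"

lemma e0_tl: "timelike (e0 :: 'n::finite lvec)" "future_pointing (e0 :: 'n::finite lvec)"
  by (auto simp: timelike_def future_pointing_def mdot_def e0_def)

lemma shift_tl:
  fixes x :: "'n::finite lvec"
  assumes "c \<ge> \<bar>x None\<bar> + (\<Sum>i\<in>UNIV. x (Some i) * x (Some i)) + 1"
  shows "timelike (\<lambda>i. x i + c * e0 i)" "future_pointing (\<lambda>i. x i + c * e0 i)"
proof -
  let ?S = "\<Sum>i\<in>UNIV. x (Some i) * x (Some i)"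
  have S: "?S \<ge> 0" by (intro sum_nonneg) auto
  have a: "x None + c \<ge> ?S + 1" using assms by linarith
  have "(x None + c) * (x None + c) \<ge> (?S + 1) * (?S + 1)"
    using a S by (intro mult_mono) auto
  moreover have "(?S + 1) * (?S + 1) > ?S" using S by (simp add: algebra_simps) (smt (verit) mult_nonneg_nonneg)
  ultimately show "timelike (\<lambda>i. x i + c * e0 i)"
    by (simp add: timelike_def mdot_def e0_def)
  show "future_pointing (\<lambda>i. x i + c * e0 i)" using a S by (simp add: future_pointing_def e0_def)
qed

lemma indicator_contract:
  fixes T :: "'n::finite option list \<Rightarrow> real"
  assumes "length as = r"
  shows "contract r T (\<lambda>k i. if i = as ! k then 1 else 0) = T as"
proof -
  have "contract r T (\<lambda>k i. if i = as ! k then 1 else 0) = (\<Sum>bs\<in>{bs. length bs = r}. if bs = as then T bs else 0)"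
    unfolding contract_def
  proof (rule sum.cong[OF refl])
    fix bs :: "'n option list" assume bs: "bs \<in> {bs. length bs = r}"
    show "T bs * (\<Prod>k<r. if bs ! k = as ! k then 1 else 0) = (if bs = as then T bs else 0)"
    proof (cases "bs = as")
      case True then show ?thesis by simp
    next
      case False
      have "\<exists>k<r. bs ! k \<noteq> as ! k"
      proof (rule ccontr)
        assume "\<not> (\<exists>k<r. bs ! k \<noteq> as ! k)"
        then have "bs = as" using bs assms by (intro nth_equalityI) auto
        then show False using False by simp
      qed
      then obtain k where "k < r" "bs ! k \<noteq> as ! k" by blast
      then have "(\<Prod>k<r. if bs ! k = as ! k then 1 else (0::real)) = 0"
        by (intro prod_zero) auto
      then show ?thesis using False by simp
    qed
  qed
  also have "\<dots> = T as" by (subst sum.delta) (simp_all add: finite_lists assms)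
  finally show ?thesis .
qed

theorem mainTheorem16:
  fixes T :: "'n::finite option list \<Rightarrow> real" and r :: nat
  assumes "r \<ge> 1" and "tensor_nonzero r T"
  shows "DP r T \<longleftrightarrow>
    (\<forall>u. (\<forall>k<r. timelike (u k) \<and> future_pointing (u k)) \<longrightarrow> contract r T u > 0)"
proof
  assume dp: "DP r T"
  show "\<forall>u. (\<forall>k<r. timelike (u k) \<and> future_pointing (u k)) \<longrightarrow> contract r T u > 0"
  proof (intro allI impI, rule ccontr)
    fix u assume tu: "\<forall>k<r. timelike (u k) \<and> future_pointing (u k)" and np: "\<not> contract r T u > 0"
    have "contract r T u \<ge> 0" using dp tu timelike_causal unfolding DP_def by blast
    then have cu: "contract r T u = 0" using np by linarith
    have Q: "\<forall>v. (\<forall>k<j. causal (v k) \<and> future_pointing (v k)) \<and> (\<forall>k. j \<le> k \<longrightarrow> v k = u k) \<longrightarrow> contract r T v = 0"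
      if "j \<le> r" for j
      using that
    proof (induction j)
      case 0
      show ?case
      proof (intro allI impI)
        fix v :: "nat \<Rightarrow> 'n lvec" assume "(\<forall>k<0. causal (v k) \<and> future_pointing (v k)) \<and> (\<forall>k. 0 \<le> k \<longrightarrow> v k = u k)"
        then have "v = u" by auto
        then show "contract r T v = 0" using cu by simp
      qed
    next
      case (Suc j)
      then have j: "j < r" by simp
      show ?case
      proof (intro allI impI)
        fix v :: "nat \<Rightarrow> 'n lvec"
        assume hv: "(\<forall>k<Suc j. causal (v k) \<and> future_pointing (v k)) \<and> (\<forall>k. Suc j \<le> k \<longrightarrow> v k = u k)"
        define G where "G w = contract r T (v(j := w))" for w
        have "G (v j) = 0"
        proof (rule cone_lemma[where G=G and p = "u j" and w="v j"])
          show "G (\<lambda>i. a * x i + b * y i) = a * G x + b * G y" for a b x y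
            unfolding G_def using contract_lin[OF j] by blast
          show "G w \<ge> 0" if "causal w" "future_pointing w" for w
            unfolding G_def using dp unfolding DP_def
          proof (elim allE impE)
            show "\<forall>k<r. causal ((v(j := w)) k) \<and> future_pointing ((v(j := w)) k)"
            proof (intro allI impI)
              fix k assume "k < r"
              show "causal ((v(j := w)) k) \<and> future_pointing ((v(j := w)) k)"
              proof (cases "k < j")
                case True then show ?thesis using hv by auto
              next
                case False
                show ?thesis
                proof (cases "k = j")
                  case True then show ?thesis using that by simp
                next
                  case False
                  then have "v k = u k" using hv \<open>\<not> k < j\<close> by auto
                  then show ?thesis using False tu \<open>k < r\<close> timelike_causal by auto
                qed
              qed
            qed
          qed
          show "timelike (u j)" "future_pointing (u j)" using tu j by auto
          have IH: "\<forall>v. (\<forall>k<j. causal (v k) \<and> future_pointing (v k)) \<and> (\<forall>k. j \<le> k \<longrightarrow> v k = u k) \<longrightarrow> contract r T v = 0"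
            using Suc.IH j by simp
          have "(\<forall>k<j. causal ((v(j := u j)) k) \<and> future_pointing ((v(j := u j)) k)) \<and> (\<forall>k. j \<le> k \<longrightarrow> (v(j := u j)) k = u k)"
            using hv by (auto simp: Suc_le_eq less_Suc_eq)
          then show "G (u j) = 0" unfolding G_def using IH by blast
        qed
        then show "contract r T v = 0" unfolding G_def by simp
      qed
    qed
    have C: "contract r T v = 0" if "\<forall>k<r. causal (v k) \<and> future_pointing (v k)" for v
    proof -
      have "contract r T (\<lambda>k. if k < r then v k else u k) = 0"
        using Q[of r] that by auto
      moreover have "contract r T (\<lambda>k. if k < r then v k else u k) = contract r T v"
        by (rule contract_cong) simp
      ultimately show ?thesis by simp
    qed
    have S: "\<forall>v. (\<forall>k. j \<le> k \<and> k < r \<longrightarrow> causal (v k) \<and> future_pointing (v k)) \<longrightarrow> contract r T v = 0" for j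
    proof (induction j)
      case 0 then show ?case using C by auto
    next
      case (Suc j)
      show ?case
      proof (cases "j < r")
        case False then show ?thesis using Suc.IH by auto
      next
        case j: True
        show ?thesis
        proof (intro allI impI)
          fix v :: "nat \<Rightarrow> 'n lvec"
          assume hv: "\<forall>k. Suc j \<le> k \<and> k < r \<longrightarrow> causal (v k) \<and> future_pointing (v k)"
          define c where "c = \<bar>v j None\<bar> + (\<Sum>i\<in>UNIV. v j (Some i) * v j (Some i)) + 1"
          define x where "x = (\<lambda>i. v j i + c * e0 i)"
          have x: "causal x" "future_pointing x" using shift_tl[of "v j" c] timelike_causal
            unfolding x_def c_def by auto
          have upd: "contract r T (v(j := y)) = 0" if "causal y" "future_pointing y" for y
          proof -
            have "\<forall>k. j \<le> k \<and> k < r \<longrightarrow> causal ((v(j := y)) k) \<and> future_pointing ((v(j := y)) k)"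
            proof (intro allI impI)
              fix k assume k: "j \<le> k \<and> k < r"
              show "causal ((v(j := y)) k) \<and> future_pointing ((v(j := y)) k)"
              proof (cases "k = j")
                case True then show ?thesis using that by simp
              next
                case False then have "Suc j \<le> k" using k by simp
                then show ?thesis using hv k False by simp
              qed
            qed
            then show ?thesis using Suc.IH by blast
          qed
          have "contract r T (v(j := x)) = 0" using upd x by blast
          moreover have "contract r T (v(j := e0)) = 0" using upd e0_tl timelike_causal by blast
          moreover have "v(j := (\<lambda>i. 1 * x i + (- c) * e0 i)) = v"
            unfolding x_def by auto
          ultimately show "contract r T v = 0" using contract_lin[OF j, of T v 1 x "-c" e0] by simp
        qed
      qed
    qed
    obtain as where as: "length as = r" "T as \<noteq> 0" using assms(2) unfolding tensor_nonzero_def by blast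
    have "contract r T (\<lambda>k i. if i = as ! k then 1 else 0) = 0" using S[of r] by auto
    then show False using indicator_contract[OF as(1), of T] as(2) by simp
  qed
next
  assume pos: "\<forall>u. (\<forall>k<r. timelike (u k) \<and> future_pointing (u k)) \<longrightarrow> contract r T u > 0"
  show "DP r T" unfolding DP_def
  proof (intro allI impI)
    fix u :: "nat \<Rightarrow> 'n lvec" assume cu: "\<forall>k<r. causal (u k) \<and> future_pointing (u k)"
    define U where "U e = (\<lambda>k i. u k i + e * e0 i)" for e :: real
    have lim: "((\<lambda>e. contract r T (U e)) \<longlongrightarrow> contract r T (U 0)) (at_right 0)"
      unfolding contract_def U_def by (intro tendsto_intros)
    have U0: "U 0 = u" unfolding U_def by simp
    have tlU: "timelike (U e k) \<and> future_pointing (U e k)" if "e > 0" "k < r" for e k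
    proof -
      have c: "causal (u k)" "future_pointing (u k)" using cu that by auto
      let ?S = "\<Sum>i\<in>UNIV. u k (Some i) * u k (Some i)"
      have m: "u k None * u k None - ?S \<ge> 0" "u k None > 0"
        using c unfolding causal_def future_pointing_def mdot_def by auto
      have "(u k None + e) * (u k None + e) > u k None * u k None"
        using m(2) that(1) by (intro mult_strict_mono) auto
      then show ?thesis using m that(1)
        by (simp add: U_def timelike_def future_pointing_def mdot_def e0_def)
    qed
    have ev: "eventually (\<lambda>e. 0 \<le> contract r T (U e)) (at_right 0)"
    proof (rule eventually_mono[OF eventually_at_right_less])
      fix e :: real assume "0 < e"
      then show "0 \<le> contract r T (U e)" using pos tlU[of e] by (simp add: less_imp_le)
    qed
    show "0 \<le> contract r T u"
      using tendsto_lowerbound[OF lim ev] U0 by simp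
  qed
qed

end
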